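(* Fix $F$ and $\phi$, and let $i$ be any individual with cost $\gamma_i$. If $k_i^*(t,F)=k_1^*(t,F)$ and $t'>t$, then $k_i^*(t',F)=k_1^*(t',F)$.
   Context: Costs $\gamma_i\in\mathbb{R}$ of compliance are distributed according to a continuously differentiable CDF $F$ with log-concave density $f$ of full support on $\mathbb{R}$. For $t\ge0$, define $k_0=k_0^*(t,F)$ and $k_1=k_1^*(t,F)$ implicitly by $k_0=t-\frac{F(k_0)}{f(k_0)}$ and $k_1=t+\frac{1-F(k_1)}{f(k_1)}$. Individual $i$'s optimal $k$ is $k_i^*(t,F)=k_1$ if $\gamma_i\le k_0F(k_0)+k_1(1-F(k_1))+t(F(k_1)-F(k_0))$, and $k_i^*(t,F)=k_0$ otherwise. *)

theory Defs
  imports "HOL-Analysis.Analysis"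
begin

definition log_concave :: "(real \<Rightarrow> real) \<Rightarrow> bool" where
  "log_concave f \<longleftrightarrow> (\<forall>x. 0 \<le> f x) \<and>
     (\<forall>x y u. 0 \<le> u \<and> u \<le> 1 \<longrightarrow>
        f x powr u * f y powr (1 - u) \<le> f (u * x + (1 - u) * y))"

definition admissible_cdf :: "(real \<Rightarrow> real) \<Rightarrow> bool" where
  "admissible_cdf F \<longleftrightarrow>
     mono F \<and> (F \<longlongrightarrow> 0) at_bot \<and> (F \<longlongrightarrow> 1) at_top \<and>
     (\<forall>x. F differentiable (at x)) \<and> continuous_on UNIV (deriv F) \<and>
     log_concave (deriv F) \<and> (\<forall>x. 0 < deriv F x)"

abbreviation dens :: "(real \<Rightarrow> real) \<Rightarrow> real \<Rightarrow> real" where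
  "dens F \<equiv> deriv F"

definition k0star :: "real \<Rightarrow> (real \<Rightarrow> real) \<Rightarrow> real" where
  "k0star t F = (THE k. k = t - F k / dens F k)"

definition k1star :: "real \<Rightarrow> (real \<Rightarrow> real) \<Rightarrow> real" where
  "k1star t F = (THE k. k = t + (1 - F k) / dens F k)"

definition threshold :: "real \<Rightarrow> (real \<Rightarrow> real) \<Rightarrow> real" where
  "threshold t F = (let k0 = k0star t F; k1 = k1star t F in
     k0 * F k0 + k1 * (1 - F k1) + t * (F k1 - F k0))"

definition kistar :: "real \<Rightarrow> real \<Rightarrow> (real \<Rightarrow> real) \<Rightarrow> real" where
  "kistar \<gamma> t F = (if \<gamma> \<le> threshold t F then k1star t F else k0star t F)"

end

theory Submission
  imports Defs
begin

lemma mono_deriv: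
  fixes g g' :: "real \<Rightarrow> real"
  assumes "\<And>x. (g has_real_derivative g' x) (at x)"
    and "\<And>x. a \<le> x \<Longrightarrow> x \<le> b \<Longrightarrow> g' x \<ge> 0" and "a \<le> b"
  shows "g a \<le> g b"
  using deriv_nonneg_imp_mono[of a b g g'] assms by auto

lemma ratio_lc:
  fixes f :: "real \<Rightarrow> real"
  assumes lc: "log_concave f" and pos: "\<And>x. f x > 0" and sx: "s \<le> x" and d: "0 < d"
  shows "f (x + d) * f s \<le> f (s + d) * f x"
proof -
  define l where "l = (x - s) / (x + d - s)"
  have den: "x + d - s > 0" using sx d by simp
  have l0: "0 \<le> l" and l1: "l \<le> 1" using sx d den by (auto simp: l_def field_simps)
  have h: "l * (x + d - s) = x - s" using den by (simp add: l_def)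
  have e1: "s + d = l * s + (1 - l) * (x + d)" using h by (simp add: algebra_simps)
  have e2: "x = (1 - l) * s + (1 - (1 - l)) * (x + d)" using h by (simp add: algebra_simps)
  have A: "f s powr l * f (x + d) powr (1 - l) \<le> f (s + d)"
    using lc l0 l1 e1 unfolding log_concave_def by metis
  have B: "f s powr (1 - l) * f (x + d) powr (1 - (1 - l)) \<le> f x"
  proof -
    have "0 \<le> 1 - l" "1 - l \<le> 1" using l0 l1 by auto
    then have "f s powr (1 - l) * f (x + d) powr (1 - (1 - l)) \<le> f ((1 - l) * s + (1 - (1 - l)) * (x + d))"
      using lc unfolding log_concave_def by blast
    then show ?thesis using e2 by simp
  qed
  have "f (x + d) * f s = (f s powr l * f (x + d) powr (1 - l)) * (f s powr (1 - l) * f (x + d) powr (1 - (1 - l)))"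
  proof -
    have "(f s powr l * f (x + d) powr (1 - l)) * (f s powr (1 - l) * f (x + d) powr (1 - (1 - l)))
       = (f s powr l * f s powr (1 - l)) * (f (x + d) powr (1 - l) * f (x + d) powr (1 - (1 - l)))"
      by (simp add: algebra_simps)
    also have "\<dots> = f s powr (l + (1 - l)) * f (x + d) powr ((1 - l) + (1 - (1 - l)))"
      by (simp only: powr_add)
    also have "\<dots> = f s * f (x + d)" using pos[of s] pos[of "x+d"] by simp
    finally show ?thesis by simp
  qed
  also have "\<dots> \<le> f (s + d) * f x"
    by (rule mult_mono[OF A B]) (use pos[of "s+d"] in auto)
  finally show ?thesis .
qed

context
  fixes F :: "real \<Rightarrow> real"
  assumes adm: "admissible_cdf F"
begin

lemma Fder: "(F has_real_derivative deriv F x) (at x)"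
  using adm unfolding admissible_cdf_def by (simp add: DERIV_deriv_iff_real_differentiable)

lemma fpos: "deriv F x > 0"
  using adm unfolding admissible_cdf_def by simp

lemma flc: "log_concave (deriv F)"
  using adm unfolding admissible_cdf_def by simp

lemma fcont: "isCont (deriv F) x"
  using adm unfolding admissible_cdf_def by (simp add: continuous_on_eq_continuous_at)

lemma Fcont: "isCont F x"
  using Fder DERIV_isCont by blast

lemma Fbot: "(F \<longlongrightarrow> 0) at_bot" using adm unfolding admissible_cdf_def by simp
lemma Ftop: "(F \<longlongrightarrow> 1) at_top" using adm unfolding admissible_cdf_def by simp

lemma Fstrict: "x < y \<Longrightarrow> F x < F y"
  by (rule DERIV_pos_imp_increasing) (use Fder fpos in auto)

lemma Fge0: "0 \<le> F x"
proof (rule tendsto_upperbound[OF Fbot])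
  show "\<forall>\<^sub>F i in at_bot. F x \<ge> F i"
    unfolding eventually_at_bot_linorder
    by (rule exI[of _ x]) (metis Fstrict order_le_less order.strict_implies_order)
qed simp

lemma Fle1: "F x \<le> 1"
proof (rule tendsto_lowerbound[OF Ftop])
  show "\<forall>\<^sub>F i in at_top. F x \<le> F i"
    unfolding eventually_at_top_linorder
    by (rule exI[of _ x]) (metis Fstrict order_le_less order.strict_implies_order)
qed simp

lemma Fpos: "0 < F x"
  using Fge0[of "x - 1"] Fstrict[of "x - 1" x] by simp

lemma Flt1: "F x < 1"
  using Fle1[of "x + 1"] Fstrict[of x "x + 1"] by simp

lemma G0_mono:
  assumes xx: "x < x'"
  shows "F x / deriv F x \<le> F x' / deriv F x'"
proof -
  define d where "d = x' - x"
  define r where "r = deriv F x' / deriv F x"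
  have d: "0 < d" using xx by (simp add: d_def)
  have x': "x' = x + d" by (simp add: d_def)
  define H where "H s = F (s + d) - r * F s" for s
  have HD: "(H has_real_derivative (deriv F (s + d) - r * deriv F s)) (at s)" for s
  proof -
    have D1: "((\<lambda>z. F (z + d)) has_real_derivative deriv F (s + d)) (at s)"
      using DERIV_shift Fder by blast
    have D2: "((\<lambda>z. r * F z) has_real_derivative r * deriv F s) (at s)"
      by (rule DERIV_cmult[OF Fder])
    show ?thesis unfolding H_def by (rule DERIV_diff[OF D1 D2])
  qed
  have rle: "r * deriv F s \<le> deriv F (s + d)" if "s \<le> x" for s
  proof -
    have "deriv F (x + d) * deriv F s \<le> deriv F (s + d) * deriv F x"
      by (rule ratio_lc[OF flc fpos that d])
    then show ?thesis using fpos[of x] by (simp add: r_def x' field_simps)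
  qed
  have Hle: "H s \<le> H x" if "s \<le> x" for s
    by (rule mono_deriv[OF HD]) (use rle that in auto)
  have lim: "((\<lambda>s. - (r * F s)) \<longlongrightarrow> 0) at_bot"
    using tendsto_minus[OF tendsto_mult_left[OF Fbot, of r]] by simp
  have "0 \<le> H x"
  proof (rule tendsto_upperbound[OF lim])
    show "\<forall>\<^sub>F s in at_bot. - (r * F s) \<le> H x"
      unfolding eventually_at_bot_linorder
    proof (intro exI allI impI)
      fix s assume "s \<le> x"
      have "- (r * F s) \<le> H s" using Fge0[of "s + d"] by (simp add: H_def)
      then show "- (r * F s) \<le> H x" using Hle[OF \<open>s \<le> x\<close>] by simp
    qed
  qed simp
  then have "r * F x \<le> F x'" by (simp add: H_def x')
  then show ?thesis using fpos[of x] fpos[of x'] by (simp add: r_def field_simps)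
qed

lemma G1_mono:
  assumes xx: "x < x'"
  shows "(1 - F x') / deriv F x' \<le> (1 - F x) / deriv F x"
proof -
  define d where "d = x' - x"
  define r where "r = deriv F x / deriv F x'"
  have d: "0 < d" using xx by (simp add: d_def)
  have x': "x' = x + d" by (simp add: d_def)
  define H where "H s = (1 - F (s + - d)) - r * (1 - F s)" for s
  have HD: "(H has_real_derivative (- deriv F (s + - d) + r * deriv F s)) (at s)" for s
  proof -
    have D1: "((\<lambda>z. F (z + - d)) has_real_derivative deriv F (s + - d)) (at s)"
      using DERIV_shift Fder by blast
    have D1': "((\<lambda>z. 1 - F (z + - d)) has_real_derivative 0 - deriv F (s + - d)) (at s)"
      by (rule DERIV_diff[OF DERIV_const D1])
    have D2: "((\<lambda>z. 1 - F z) has_real_derivative 0 - deriv F s) (at s)"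
      by (rule DERIV_diff[OF DERIV_const Fder])
    have D2': "((\<lambda>z. r * (1 - F z)) has_real_derivative r * (0 - deriv F s)) (at s)"
      by (rule DERIV_cmult[OF D2])
    have "(H has_real_derivative (0 - deriv F (s + - d)) - r * (0 - deriv F s)) (at s)"
      unfolding H_def by (rule DERIV_diff[OF D1' D2'])
    then show ?thesis by simp
  qed
  have rle: "r * deriv F s \<le> deriv F (s + - d)" if "x' \<le> s" for s
  proof -
    have "deriv F (s - d + d) * deriv F x \<le> deriv F (x + d) * deriv F (s - d)"
      by (rule ratio_lc[OF flc fpos _ d]) (use that x' in simp)
    then show ?thesis using fpos[of x'] by (simp add: r_def x' field_simps)
  qed
  have Hle: "H s \<le> H x'" if "x' \<le> s" for s
  proof -
    have "(\<lambda>s. - H s) x' \<le> (\<lambda>s. - H s) s"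
      by (rule mono_deriv[OF DERIV_minus[OF HD]]) (use rle that in auto)
    then show ?thesis by simp
  qed
  have lim: "((\<lambda>s. - (r * (1 - F s))) \<longlongrightarrow> 0) at_top"
  proof -
    have "((\<lambda>s. 1 - F s) \<longlongrightarrow> 1 - 1) at_top" by (intro tendsto_intros Ftop)
    then show ?thesis using tendsto_minus[OF tendsto_mult_left[of "\<lambda>s. 1 - F s" 0 at_top r]] by simp
  qed
  have "0 \<le> H x'"
  proof (rule tendsto_upperbound[OF lim])
    show "\<forall>\<^sub>F s in at_top. - (r * (1 - F s)) \<le> H x'"
      unfolding eventually_at_top_linorder
    proof (intro exI allI impI)
      fix s assume "x' \<le> s"
      have "- (r * (1 - F s)) \<le> H s" using Fle1[of "s + - d"] by (simp add: H_def)
      then show "- (r * (1 - F s)) \<le> H x'" using Hle[OF \<open>x' \<le> s\<close>] by simp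
    qed
  qed simp
  then have "r * (1 - F x') \<le> 1 - F x" by (simp add: H_def x')
  then show ?thesis using fpos[of x] fpos[of x'] by (simp add: r_def field_simps)
qed

lemma h0_mono: "k \<le> k' \<Longrightarrow> k + F k / deriv F k \<le> k' + F k' / deriv F k'"
  using G0_mono[of k k'] by (cases "k = k'") auto

lemma h1_mono: "k \<le> k' \<Longrightarrow> k - (1 - F k) / deriv F k \<le> k' - (1 - F k') / deriv F k'"
  using G1_mono[of k k'] by (cases "k = k'") auto

lemma h0_strict: "k < k' \<Longrightarrow> k + F k / deriv F k < k' + F k' / deriv F k'"
  using G0_mono[of k k'] by auto

lemma h1_strict: "k < k' \<Longrightarrow> k - (1 - F k) / deriv F k < k' - (1 - F k') / deriv F k'"
  using G1_mono[of k k'] by auto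

lemma G0_pos: "F k / deriv F k > 0" using Fpos fpos by simp
lemma G1_pos: "(1 - F k) / deriv F k > 0" using Flt1 fpos by simp

lemma k0_ex1: "\<exists>!k. k = t - F k / deriv F k"
proof -
  define h where "h k = k + F k / deriv F k" for k
  define a where "a = t - F t / deriv F t - 1"
  have at: "a \<le> t" using G0_pos[of t] by (simp add: a_def)
  have at': "a < t" using G0_pos[of t] by (simp add: a_def)
  have ha: "h a \<le> t" using G0_mono[OF at'] unfolding h_def a_def by linarith
  have hb: "t \<le> h t" using G0_pos[of t] by (simp add: h_def)
  have cont: "\<forall>x. a \<le> x \<and> x \<le> t \<longrightarrow> isCont h x"
  proof (intro allI impI)
    fix x
    have "deriv F x \<noteq> 0" using fpos[of x] by simp
    then show "isCont h x" unfolding h_def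
      by (intro continuous_intros Fcont fcont)
  qed
  obtain k where "h k = t" using IVT[of h a t t, OF ha hb at cont] by blast
  then have ex: "k = t - F k / deriv F k" by (simp add: h_def)
  show ?thesis
  proof (rule ex1I[of _ k])
    show "k = t - F k / deriv F k" by (rule ex)
    fix k' assume k': "k' = t - F k' / deriv F k'"
    show "k' = k"
    proof (rule ccontr)
      assume "k' \<noteq> k"
      then consider "k' < k" | "k < k'" by linarith
      then show False using h0_strict[of k' k] h0_strict[of k k'] ex k' by (cases; linarith)
    qed
  qed
qed

lemma k1_ex1: "\<exists>!k. k = t + (1 - F k) / deriv F k"
proof -
  define h where "h k = k - (1 - F k) / deriv F k" for k
  define b where "b = t + (1 - F t) / deriv F t + 1"
  have at: "t \<le> b" using G1_pos[of t] by (simp add: b_def)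
  have at': "t < b" using G1_pos[of t] by (simp add: b_def)
  have hb: "t \<le> h b" using G1_mono[OF at'] unfolding h_def b_def by linarith
  have ha: "h t \<le> t" using G1_pos[of t] by (simp add: h_def)
  have cont: "\<forall>x. t \<le> x \<and> x \<le> b \<longrightarrow> isCont h x"
  proof (intro allI impI)
    fix x
    have "deriv F x \<noteq> 0" using fpos[of x] by simp
    then show "isCont h x" unfolding h_def
      by (intro continuous_intros Fcont fcont)
  qed
  obtain k where "h k = t" using IVT[of h t t b, OF ha hb at cont] by blast
  then have ex: "k = t + (1 - F k) / deriv F k" by (simp add: h_def)
  show ?thesis
  proof (rule ex1I[of _ k])
    show "k = t + (1 - F k) / deriv F k" by (rule ex)
    fix k' assume k': "k' = t + (1 - F k') / deriv F k'"
    show "k' = k"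
    proof (rule ccontr)
      assume "k' \<noteq> k"
      then consider "k' < k" | "k < k'" by linarith
      then show False using h1_strict[of k' k] h1_strict[of k k'] ex k' by (cases; linarith)
    qed
  qed
qed

lemma k0_eq: "k0star t F = t - F (k0star t F) / deriv F (k0star t F)"
  unfolding k0star_def by (rule theI'[OF k0_ex1])

lemma k1_eq: "k1star t F = t + (1 - F (k1star t F)) / deriv F (k1star t F)"
  unfolding k1star_def by (rule theI'[OF k1_ex1])

lemma k0_lt: "k0star t F < t"
  using k0_eq[of t] G0_pos[of "k0star t F"] by linarith

lemma k1_gt: "t < k1star t F"
  using k1_eq[of t] G1_pos[of "k1star t F"] by linarith

lemma k0_opt: "(k0star t F - t) * F (k0star t F) \<le> (k - t) * F k"
proof -
  define k0 where "k0 = k0star t F"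
  have hk0: "k0 + F k0 / deriv F k0 = t" using k0_eq[of t] unfolding k0_def by linarith
  define p where "p k = (k - t) * F k" for k
  define p' where "p' k = deriv F k * ((k + F k / deriv F k) - t)" for k
  have pD: "(p has_real_derivative p' k) (at k)" for k
  proof -
    have "(p has_real_derivative (1 - 0) * F k + deriv F k * (k - t)) (at k)"
      unfolding p_def by (rule DERIV_mult[OF DERIV_diff[OF DERIV_ident DERIV_const] Fder])
    moreover have "(1 - 0) * F k + deriv F k * (k - t) = p' k"
      using fpos[of k] by (simp add: p'_def field_simps)
    ultimately show ?thesis by simp
  qed
  show ?thesis
  proof (cases "k \<le> k0")
    case True
    have "(\<lambda>k. - p k) k \<le> (\<lambda>k. - p k) k0"
    proof (rule mono_deriv[OF DERIV_minus[OF pD] _ True])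
      fix y assume "k \<le> y" "y \<le> k0"
      then have "y + F y / deriv F y \<le> t" using h0_mono[of y k0] hk0 by simp
      then show "0 \<le> - p' y" using fpos[of y] by (simp add: p'_def mult_le_0_iff)
    qed
    then show ?thesis by (simp add: p_def k0_def)
  next
    case False
    have "p k0 \<le> p k"
    proof (rule mono_deriv[OF pD])
      fix y assume "k0 \<le> y" "y \<le> k"
      then have "t \<le> y + F y / deriv F y" using h0_mono[of k0 y] hk0 by simp
      then show "0 \<le> p' y" using fpos[of y] by (simp add: p'_def)
    qed (use False in simp)
    then show ?thesis by (simp add: p_def k0_def)
  qed
qed

lemma k1_opt: "(k - t) * (1 - F k) \<le> (k1star t F - t) * (1 - F (k1star t F))"
proof -
  define k1 where "k1 = k1star t F"
  have hk1: "k1 - (1 - F k1) / deriv F k1 = t" using k1_eq[of t] unfolding k1_def by linarith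
  define p where "p k = - ((k - t) * (1 - F k))" for k
  define p' where "p' k = deriv F k * ((k - (1 - F k) / deriv F k) - t)" for k
  have pD: "(p has_real_derivative p' k) (at k)" for k
  proof -
    have "((\<lambda>k. (k - t) * (1 - F k)) has_real_derivative (1 - 0) * (1 - F k) + (0 - deriv F k) * (k - t)) (at k)"
      by (rule DERIV_mult[OF DERIV_diff[OF DERIV_ident DERIV_const] DERIV_diff[OF DERIV_const Fder]])
    then have "(p has_real_derivative - ((1 - 0) * (1 - F k) + (0 - deriv F k) * (k - t))) (at k)"
      unfolding p_def by (rule DERIV_minus)
    moreover have "- ((1 - 0) * (1 - F k) + (0 - deriv F k) * (k - t)) = p' k"
      using fpos[of k] by (simp add: p'_def field_simps)
    ultimately show ?thesis by simp
  qed
  show ?thesis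
  proof (cases "k \<le> k1")
    case True
    have "(\<lambda>k. - p k) k \<le> (\<lambda>k. - p k) k1"
    proof (rule mono_deriv[OF DERIV_minus[OF pD] _ True])
      fix y assume "k \<le> y" "y \<le> k1"
      then have "y - (1 - F y) / deriv F y \<le> t" using h1_mono[of y k1] hk1 by simp
      then show "0 \<le> - p' y" using fpos[of y] by (simp add: p'_def mult_le_0_iff)
    qed
    then show ?thesis by (simp add: p_def k1_def)
  next
    case False
    have "p k1 \<le> p k"
    proof (rule mono_deriv[OF pD])
      fix y assume "k1 \<le> y" "y \<le> k"
      then have "t \<le> y - (1 - F y) / deriv F y" using h1_mono[of k1 y] hk1 by simp
      then show "0 \<le> p' y" using fpos[of y] by (simp add: p'_def)
    qed (use False in simp)
    then show ?thesis by (simp add: p_def k1_def)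
  qed
qed

lemma thr_eq: "threshold t F = (k0star t F - t) * F (k0star t F) + (k1star t F - t) * (1 - F (k1star t F)) + t"
  unfolding threshold_def Let_def by (simp add: algebra_simps)

lemma thr_step:
  assumes ab: "a \<le> b" and bk: "b \<le> k1star a F"
  shows "threshold a F \<le> threshold b F"
proof -
  define k0a where "k0a = k0star a F"
  define k0b where "k0b = k0star b F"
  define k1a where "k1a = k1star a F"
  define k1b where "k1b = k1star b F"
  have o1: "(k0a - a) * F k0a \<le> (k0b - a) * F k0b" unfolding k0a_def by (rule k0_opt)
  have o2: "(k1a - b) * (1 - F k1a) \<le> (k1b - b) * (1 - F k1b)" unfolding k1b_def by (rule k1_opt)
  have "k0b < b" unfolding k0b_def by (rule k0_lt)
  then have "k0b \<le> k1a" using bk k1a_def by simp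
  then have FF: "F k0b \<le> F k1a" using Fstrict[of k0b k1a] by (cases "k0b = k1a") auto
  have "0 \<le> (b - a) * (F k1a - F k0b)" using ab FF by simp
  then have "threshold a F \<le> (k0b - b) * F k0b + (k1b - b) * (1 - F k1b) + b"
    using o1 o2 unfolding thr_eq k0a_def[symmetric] k1a_def[symmetric]
    by (simp add: algebra_simps)
  then show ?thesis unfolding thr_eq k0b_def k1b_def .
qed

lemma k1_mono: "s \<le> b \<Longrightarrow> k1star s F \<le> k1star b F"
  using h1_strict[of "k1star b F" "k1star s F"] k1_eq[of s] k1_eq[of b] by force

lemma thr_mono:
  assumes ab: "a \<le> b"
  shows "threshold a F \<le> threshold b F"
proof -
  define e where "e = (1 - F (k1star b F)) / deriv F (k1star b F)"
  have e: "0 < e" unfolding e_def by (rule G1_pos)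
  have gap: "s + e \<le> k1star s F" if "s \<le> b" for s
  proof -
    have "k1star s F \<le> k1star b F" by (rule k1_mono[OF that])
    then have "e \<le> (1 - F (k1star s F)) / deriv F (k1star s F)"
      unfolding e_def using G1_mono[of "k1star s F" "k1star b F"] by (cases "k1star s F = k1star b F") auto
    then show ?thesis using k1_eq[of s] by linarith
  qed
  have "\<forall>x. x \<le> b \<and> b - x \<le> real n * e \<longrightarrow> threshold x F \<le> threshold b F" for n
  proof (induction n)
    case 0
    show ?case
    proof (intro allI impI)
      fix x assume "x \<le> b \<and> b - x \<le> real 0 * e"
      then have "x = b" by simp
      then show "threshold x F \<le> threshold b F" by simp
    qed
  next
    case (Suc n)
    show ?case
    proof (intro allI impI)
      fix x assume x: "x \<le> b \<and> b - x \<le> real (Suc n) * e"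
      show "threshold x F \<le> threshold b F"
      proof (cases "b - x \<le> e")
        case True
        then show ?thesis using thr_step[of x b] gap[of x] x by simp
      next
        case False
        have "threshold x F \<le> threshold (x + e) F"
          using thr_step[of x "x + e"] gap[of x] x e by simp
        also have "\<dots> \<le> threshold b F"
          using Suc.IH x False by (simp add: algebra_simps)
        finally show ?thesis .
      qed
    qed
  qed
  moreover obtain n where "(b - a) / e \<le> real n" using real_arch_simple by blast
  then have "b - a \<le> real n * e" using e by (simp add: field_simps)
  ultimately show ?thesis using ab by blast
qed

end

theorem proposition6:
  fixes F :: "real \<Rightarrow> real" and \<gamma> t t' :: real
  assumes "admissible_cdf F"
    and "0 \<le> t"
    and "kistar \<gamma> t F = k1star t F"
    and "t' > t"
  shows "kistar \<gamma> t' F = k1star t' F"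
proof -
  have "\<gamma> \<le> threshold t F"
  proof (rule ccontr)
    assume "\<not> ?thesis"
    then have "k0star t F = k1star t F" using assms(3) by (simp add: kistar_def)
    then show False using k0_lt[OF assms(1), of t] k1_gt[OF assms(1), of t] by simp
  qed
  also have "\<dots> \<le> threshold t' F" using thr_mono[OF assms(1)] assms(4) by simp
  finally show ?thesis by (simp add: kistar_def)
qed

end
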